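(* Let $A=\{a_1,a_2,\ldots,a_k\}$ be a set of $k\ge1$ distinct positive integers, let $\alpha$ be a positive integer with $\alpha\le k$, let $\tau$ be a permutation of $\{1,2,\ldots,k\}$, and let $A_{\tau(j)}=\{a_{\tau(1)},\ldots,a_{\tau(j)}\}$ for $j=1,\ldots,k$, with $A_{\tau(0)}=\emptyset$. Then \[ (a)\quad f(A)= \sum_{j=1}^k \sum_{ d\mid a_{\tau(j)} } \mu(d)\, 2^{v(A_{\tau(j-1)},d)}, \] \[ (b) \quad f_{\alpha}(A) = \sum_{j=1}^k \sum_{ d\mid a_{\tau(j)} } \mu(d) \binom{v(A_{\tau(j-1)},d)}{\alpha -1}. \]
   Context: $\mu$ is the Möbius function. For a finite set $B$ of positive integers and a positive integer $d$, $v(B,d)$ is the number of multiples of $d$ in $B$ (so $v(\emptyset,d)=0$). $f(A)$ is the number of nonempty subsets $X\subseteq A$ with $\gcd(X)=1$, and $f_\alpha(A)$ is the number of subsets $X\subseteq A$ with $|X|=\alpha$ and $\gcd(X)=1$. Binomial coefficients satisfy $\binom{m}{0}=1$ and $\binom{m}{k}=0$ when $k>m$. *)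

theory Defs
  imports "HOL-Computational_Algebra.Computational_Algebra" "HOL-Combinatorics.Permutations"
begin

definition mobius :: "nat \<Rightarrow> int" where
  "mobius d = (if squarefree d then (-1) ^ card (prime_factors d) else 0)"

definition v :: "nat set \<Rightarrow> nat \<Rightarrow> nat" where
  "v B d = card {b \<in> B. d dvd b}"

definition f :: "nat set \<Rightarrow> nat" where
  "f A = card {X. X \<subseteq> A \<and> X \<noteq> {} \<and> Gcd X = 1}"

definition f_alpha :: "nat \<Rightarrow> nat set \<Rightarrow> nat" where
  "f_alpha \<alpha> A = card {X. X \<subseteq> A \<and> card X = \<alpha> \<and> Gcd X = 1}"

end

theory Submission
  imports Defs
begin

lemma pf_prod:
  fixes P :: "nat set"
  assumes "finite P" "\<forall>p\<in>P. prime p"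
  shows "prime_factorization (\<Prod>P) = mset_set P"
proof -
  have "\<Prod>P = prod_mset (mset_set P)" by (simp add: prod_unfold_prod_mset)
  moreover have "prime_factorization (prod_mset (mset_set P)) = mset_set P"
    by (rule prime_factorization_prod_mset_primes) (use assms in auto)
  ultimately show ?thesis by simp
qed

lemma prod_ne0: "\<forall>p\<in>P. prime (p::nat) \<Longrightarrow> \<Prod>P \<noteq> 0"
  by (metis prod_zero_iff not_prime_0 prod.infinite zero_neq_one)

lemma pfs_prod:
  fixes P :: "nat set"
  assumes "finite P" "\<forall>p\<in>P. prime p"
  shows "prime_factors (\<Prod>P) = P"
  using pf_prod[OF assms] assms by simp

lemma sqf_prod:
  fixes P :: "nat set"
  assumes "finite P" "\<forall>p\<in>P. prime p"
  shows "squarefree (\<Prod>P)"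
proof -
  have nz: "\<Prod>P \<noteq> 0" using prod_ne0 assms by blast
  show ?thesis
  proof (subst squarefree_factorial_semiring''[OF nz], intro allI impI)
    fix p :: nat assume "prime p"
    have "multiplicity p (\<Prod>P) = count (prime_factorization (\<Prod>P)) p"
      using \<open>prime p\<close> by (simp add: count_prime_factorization)
    also have "\<dots> \<le> 1" using pf_prod[OF assms] assms by (simp add: count_mset_set')
    finally show "multiplicity p (\<Prod>P) \<le> 1" .
  qed
qed

lemma mobius_prod:
  fixes P :: "nat set"
  assumes "finite P" "\<forall>p\<in>P. prime p"
  shows "mobius (\<Prod>P) = (-1) ^ card P"
  using sqf_prod[OF assms] pfs_prod[OF assms] by (simp add: mobius_def)

lemma sqf_eq_prod:
  fixes d :: nat
  assumes "d > 0" "squarefree d"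
  shows "\<Prod>(prime_factors d) = d"
proof -
  have "\<forall>p\<in>prime_factors d. multiplicity p d = 1"
    using assms squarefree_factorial_semiring' by (metis not_gr0)
  hence "(\<Prod>p \<in> prime_factors d. p ^ multiplicity p d) = \<Prod>(prime_factors d)"
    by (intro prod.cong) auto
  with prod_prime_factors[of d] assms show ?thesis by simp
qed

lemma alt_pow:
  assumes "finite S" "S \<noteq> {}"
  shows "(\<Sum>P\<in>Pow S. (-1::int) ^ card P) = 0"
proof -
  obtain x where x: "x \<in> S" using assms by blast
  define T where "T = S - {x}"
  have S: "S = insert x T" "x \<notin> T" "finite T" using x assms by (auto simp: T_def)
  have "Pow S = Pow T \<union> insert x ` Pow T" using S(1) by (simp add: Pow_insert)
  moreover have "Pow T \<inter> insert x ` Pow T = {}" using S(2) by auto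
  ultimately have "(\<Sum>P\<in>Pow S. (-1::int) ^ card P) =
      (\<Sum>P\<in>Pow T. (-1::int) ^ card P) + (\<Sum>P\<in>insert x ` Pow T. (-1::int) ^ card P)"
    using S(3) by (simp add: sum.union_disjoint)
  also have "(\<Sum>P\<in>insert x ` Pow T. (-1::int) ^ card P) = (\<Sum>P\<in>Pow T. (-1::int) ^ card (insert x P))"
  proof -
    have "inj_on (insert x) (Pow T)"
    proof (rule inj_onI)
      fix A B assume "A \<in> Pow T" "B \<in> Pow T" "insert x A = insert x B"
      thus "A = B" using S(2) by (metis Diff_insert_absorb PowD subsetD)
    qed
    thus ?thesis by (simp add: sum.reindex o_def)
  qed
  also have "\<dots> = (\<Sum>P\<in>Pow T. - ((-1::int) ^ card P))"
  proof (rule sum.cong)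
    fix P assume "P \<in> Pow T"
    hence "finite P" "x \<notin> P" using S by (auto intro: finite_subset)
    thus "(-1::int) ^ card (insert x P) = - ((-1) ^ card P)" by simp
  qed simp
  finally show ?thesis by (simp add: sum_negf)
qed

lemma mobius_sum:
  fixes n :: nat
  assumes "n > 0"
  shows "(\<Sum>d | d dvd n. mobius d) = (if n = 1 then 1 else 0)"
proof -
  let ?D = "{d. d dvd n \<and> squarefree d}"
  let ?S = "prime_factors n"
  have fin: "finite {d. d dvd n}" using assms by simp
  have "(\<Sum>d | d dvd n. mobius d) = (\<Sum>d\<in>?D. mobius d)"
    by (rule sum.mono_neutral_right[OF fin]) (auto simp: mobius_def)
  also have "\<dots> = (\<Sum>P\<in>Pow ?S. mobius (\<Prod>P))"
  proof (rule sum.reindex_bij_betw[symmetric], rule bij_betw_byWitness[where f' = prime_factors])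
    show "\<forall>P\<in>Pow ?S. prime_factors (\<Prod>P) = P"
      by (auto intro!: pfs_prod intro: finite_subset)
    show "\<forall>d\<in>?D. \<Prod>(prime_factors d) = d"
      using assms by (auto intro!: sqf_eq_prod dest: dvd_imp_le intro: Nat.gr0I)
    show "prime_factors ` ?D \<subseteq> Pow ?S"
    proof safe
      fix d p assume "d dvd n" "p \<in> prime_factors d"
      thus "p \<in> prime_factors n" using dvd_prime_factors[of n d] assms by auto
    qed
    show "(\<lambda>P. \<Prod>P) ` Pow ?S \<subseteq> ?D"
    proof safe
      fix P assume P: "P \<subseteq> ?S"
      have fP: "finite P" "\<forall>p\<in>P. prime p" using P by (auto intro: finite_subset)
      show "squarefree (\<Prod>P)" by (rule sqf_prod[OF fP])
      have "prime_factorization (\<Prod>P) \<subseteq># prime_factorization n"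
        unfolding pf_prod[OF fP] subseteq_mset_def
      proof
        fix p show "count (mset_set P) p \<le> count (prime_factorization n) p"
          using P fP(1) by (cases "p \<in> P") (auto simp: count_mset_set Suc_le_eq)
      qed
      thus "\<Prod>P dvd n" using prime_factorization_subset_iff_dvd[of "\<Prod>P" n] prod_ne0[OF fP(2)] assms by simp
    qed
  qed
  also have "\<dots> = (\<Sum>P\<in>Pow ?S. (-1) ^ card P)"
    by (intro sum.cong refl mobius_prod) (auto intro: finite_subset)
  also have "\<dots> = (if n = 1 then 1 else 0)"
  proof (cases "n = 1")
    case False
    hence "?S \<noteq> {}" using assms prime_factorization_empty_iff[of n] by auto
    from alt_pow[OF _ this] False show ?thesis by simp
  qed simp
  finally show ?thesis .
qed


lemma card_int_filter:
  assumes "finite T"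
  shows "int (card {Y\<in>T. R Y}) = (\<Sum>Y\<in>T. if R Y then 1 else 0)"
  using sum.inter_filter[OF assms, of "\<lambda>_. (1::int)" R] by simp

lemma core:
  fixes B :: "nat set" and x :: nat
  assumes "finite B" "x > 0"
  shows "int (card {Y. Y \<subseteq> B \<and> Q Y \<and> Gcd (insert x Y) = 1}) =
     (\<Sum>d | d dvd x. mobius d * int (card {Y. Y \<subseteq> B \<and> Q Y \<and> (\<forall>y\<in>Y. d dvd y)}))"
proof -
  let ?T = "{Y. Y \<subseteq> B \<and> Q Y}"
  let ?D = "{d. d dvd x}"
  have fT: "finite ?T" using assms(1) by (rule finite_subset[rotated, OF finite_Pow_iff[THEN iffD2]]) auto
  have fD: "finite ?D" using assms(2) by simp
  have "{Y. Y \<subseteq> B \<and> Q Y \<and> Gcd (insert x Y) = 1} = {Y\<in>?T. gcd x (Gcd Y) = 1}" by auto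
  hence "int (card {Y. Y \<subseteq> B \<and> Q Y \<and> Gcd (insert x Y) = 1}) =
      (\<Sum>Y\<in>?T. if gcd x (Gcd Y) = 1 then 1 else 0)" using card_int_filter[OF fT] by simp
  also have "\<dots> = (\<Sum>Y\<in>?T. \<Sum>d\<in>?D. if d dvd Gcd Y then mobius d else 0)"
  proof (rule sum.cong[OF refl])
    fix Y
    have pos: "gcd x (Gcd Y) > 0" using assms(2) by simp
    have "(\<Sum>d\<in>?D. if d dvd Gcd Y then mobius d else 0) = (\<Sum>d\<in>{d\<in>?D. d dvd Gcd Y}. mobius d)"
      using sum.inter_filter[OF fD, of mobius "\<lambda>d. d dvd Gcd Y"] by simp
    also have "{d\<in>?D. d dvd Gcd Y} = {d. d dvd gcd x (Gcd Y)}" by auto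
    also have "(\<Sum>d\<in>\<dots>. mobius d) = (if gcd x (Gcd Y) = 1 then 1 else 0)" by (rule mobius_sum[OF pos])
    finally show "(if gcd x (Gcd Y) = 1 then 1 else 0) = (\<Sum>d\<in>?D. if d dvd Gcd Y then mobius d else 0)" by simp
  qed
  also have "\<dots> = (\<Sum>d\<in>?D. \<Sum>Y\<in>?T. if d dvd Gcd Y then mobius d else 0)" by (rule sum.swap)
  also have "\<dots> = (\<Sum>d\<in>?D. mobius d * int (card {Y. Y \<subseteq> B \<and> Q Y \<and> (\<forall>y\<in>Y. d dvd y)}))"
  proof (rule sum.cong[OF refl])
    fix d
    have "{Y. Y \<subseteq> B \<and> Q Y \<and> (\<forall>y\<in>Y. d dvd y)} = {Y\<in>?T. d dvd Gcd Y}" by (auto simp: dvd_Gcd_iff)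
    hence "int (card {Y. Y \<subseteq> B \<and> Q Y \<and> (\<forall>y\<in>Y. d dvd y)}) = (\<Sum>Y\<in>?T. if d dvd Gcd Y then 1 else 0)"
      using card_int_filter[OF fT] by simp
    thus "(\<Sum>Y\<in>?T. if d dvd Gcd Y then mobius d else 0) = mobius d * int (card {Y. Y \<subseteq> B \<and> Q Y \<and> (\<forall>y\<in>Y. d dvd y)})"
      by (simp add: sum_distrib_left if_distrib cong: if_cong)
  qed
  finally show ?thesis .
qed

lemma core_f:
  fixes B :: "nat set" and x :: nat
  assumes "finite B" "x > 0"
  shows "int (card {Y. Y \<subseteq> B \<and> Gcd (insert x Y) = 1}) = (\<Sum>d | d dvd x. mobius d * 2 ^ v B d)"
proof -
  have "int (card {Y. Y \<subseteq> B \<and> Gcd (insert x Y) = 1}) = (\<Sum>d | d dvd x. mobius d * int (card {Y. Y \<subseteq> B \<and> True \<and> (\<forall>y\<in>Y. d dvd y)}))"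
    using core[OF assms, of "\<lambda>_. True"] by simp
  also have "\<dots> = (\<Sum>d | d dvd x. mobius d * 2 ^ v B d)"
  proof (rule sum.cong[OF refl])
    fix d
    have "{Y. Y \<subseteq> B \<and> True \<and> (\<forall>y\<in>Y. d dvd y)} = Pow {b\<in>B. d dvd b}" by auto
    thus "mobius d * int (card {Y. Y \<subseteq> B \<and> True \<and> (\<forall>y\<in>Y. d dvd y)}) = mobius d * 2 ^ v B d"
      using assms(1) by (simp add: card_Pow v_def)
  qed
  finally show ?thesis .
qed

lemma core_fa:
  fixes B :: "nat set" and x :: nat
  assumes "finite B" "x > 0"
  shows "int (card {Y. Y \<subseteq> B \<and> card Y = m \<and> Gcd (insert x Y) = 1}) = (\<Sum>d | d dvd x. mobius d * int (v B d choose m))"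
proof -
  have "int (card {Y. Y \<subseteq> B \<and> card Y = m \<and> Gcd (insert x Y) = 1}) = (\<Sum>d | d dvd x. mobius d * int (card {Y. Y \<subseteq> B \<and> card Y = m \<and> (\<forall>y\<in>Y. d dvd y)}))"
    using core[OF assms, of "\<lambda>Y. card Y = m"] by simp
  also have "\<dots> = (\<Sum>d | d dvd x. mobius d * int (v B d choose m))"
  proof (rule sum.cong[OF refl])
    fix d
    have "{Y. Y \<subseteq> B \<and> card Y = m \<and> (\<forall>y\<in>Y. d dvd y)} = {Y. Y \<subseteq> {b\<in>B. d dvd b} \<and> card Y = m}" by auto
    thus "mobius d * int (card {Y. Y \<subseteq> B \<and> card Y = m \<and> (\<forall>y\<in>Y. d dvd y)}) = mobius d * int (v B d choose m)"
      using assms(1) by (simp add: n_subsets v_def)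
  qed
  finally show ?thesis .
qed

lemma rec_gen:
  fixes B :: "nat set"
  assumes "finite B" "x \<notin> B"
  shows "card {X. X \<subseteq> insert x B \<and> R X} = card {X. X \<subseteq> B \<and> R X} + card {Y. Y \<subseteq> B \<and> R (insert x Y)}"
proof -
  have eq: "{X. X \<subseteq> insert x B \<and> R X} = {X. X \<subseteq> B \<and> R X} \<union> insert x ` {Y. Y \<subseteq> B \<and> R (insert x Y)}"
  proof (intro equalityI subsetI)
    fix X assume "X \<in> {X. X \<subseteq> insert x B \<and> R X}"
    hence X: "X \<subseteq> insert x B" "R X" by auto
    show "X \<in> {X. X \<subseteq> B \<and> R X} \<union> insert x ` {Y. Y \<subseteq> B \<and> R (insert x Y)}"
    proof (cases "x \<in> X")
      case True
      hence "X = insert x (X - {x})" by auto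
      moreover have "X - {x} \<subseteq> B" using X(1) by auto
      ultimately have "X \<in> insert x ` {Y. Y \<subseteq> B \<and> R (insert x Y)}" using X(2)
        by (metis (mono_tags, lifting) image_eqI mem_Collect_eq)
      thus ?thesis by blast
    next
      case False thus ?thesis using X by auto
    qed
  qed auto
  have fin: "finite {X. X \<subseteq> C \<and> P X}" if "finite C" for C :: "nat set" and P
    using that by (rule finite_subset[rotated, OF finite_Pow_iff[THEN iffD2]]) auto
  have disj: "{X. X \<subseteq> B \<and> R X} \<inter> insert x ` {Y. Y \<subseteq> B \<and> R (insert x Y)} = {}" using assms(2) by auto
  have inj: "inj_on (insert x) {Y. Y \<subseteq> B \<and> R (insert x Y)}"
  proof (rule inj_onI)
    fix A C assume "A \<in> {Y. Y \<subseteq> B \<and> R (insert x Y)}" "C \<in> {Y. Y \<subseteq> B \<and> R (insert x Y)}" "insert x A = insert x C"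
    thus "A = C" using assms(2) by (metis (no_types, lifting) Diff_insert_absorb mem_Collect_eq subsetD)
  qed
  show ?thesis unfolding eq
    by (subst card_Un_disjoint) (use fin assms(1) disj in \<open>auto simp: card_image[OF inj]\<close>)
qed

lemma f_rec:
  assumes "finite B" "x \<notin> B"
  shows "int (f (insert x B)) = int (f B) + int (card {Y. Y \<subseteq> B \<and> Gcd (insert x Y) = 1})"
  using rec_gen[OF assms, of "\<lambda>X. X \<noteq> {} \<and> Gcd X = 1"] unfolding f_def by (simp add: conj_assoc)

lemma fa_rec:
  assumes "finite B" "x \<notin> B" "\<alpha> \<ge> 1"
  shows "int (f_alpha \<alpha> (insert x B)) = int (f_alpha \<alpha> B) + int (card {Y. Y \<subseteq> B \<and> card Y = \<alpha> - 1 \<and> Gcd (insert x Y) = 1})"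
proof -
  have "{Y. Y \<subseteq> B \<and> card (insert x Y) = \<alpha> \<and> Gcd (insert x Y) = 1} = {Y. Y \<subseteq> B \<and> card Y = \<alpha> - 1 \<and> Gcd (insert x Y) = 1}"
  proof -
    have "card (insert x Y) = Suc (card Y)" if "Y \<subseteq> B" for Y
      using that assms(1,2) by (subst card_insert_disjoint) (auto intro: finite_subset)
    thus ?thesis using assms(3) by auto
  qed
  thus ?thesis using rec_gen[OF assms(1,2), of "\<lambda>X. card X = \<alpha> \<and> Gcd X = 1"] unfolding f_alpha_def by simp
qed

lemma tele:
  fixes F :: "nat set \<Rightarrow> int" and b :: "nat \<Rightarrow> nat"
  assumes "F {} = 0"
    and step: "\<And>B x. finite B \<Longrightarrow> x \<notin> B \<Longrightarrow> x > 0 \<Longrightarrow> F (insert x B) = F B + G B x"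
    and "inj_on b {1..m}" "\<forall>i\<in>{1..m}. b i > 0"
  shows "F (b ` {1..m}) = (\<Sum>j=1..m. G (b ` {1..j-1}) (b j))"
  using assms(3,4)
proof (induction m)
  case 0 thus ?case using assms(1) by simp
next
  case (Suc m)
  have inj: "inj_on b {1..m}" using Suc.prems(1) by (rule inj_on_subset) auto
  have nin: "b (Suc m) \<notin> b ` {1..m}"
  proof
    assume "b (Suc m) \<in> b ` {1..m}"
    then obtain i where "i \<in> {1..m}" "b (Suc m) = b i" by auto
    with inj_onD[OF Suc.prems(1), of "Suc m" i] show False by auto
  qed
  have pos: "b (Suc m) > 0" using Suc.prems(2) by auto
  have IH: "F (b ` {1..m}) = (\<Sum>j=1..m. G (b ` {1..j-1}) (b j))" using Suc.IH inj Suc.prems(2) by auto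
  have "b ` {1..Suc m} = insert (b (Suc m)) (b ` {1..m})" by (auto simp: atLeastAtMostSuc_conv)
  hence "F (b ` {1..Suc m}) = F (b ` {1..m}) + G (b ` {1..m}) (b (Suc m))"
    using step[OF _ nin pos] by simp
  thus ?case using IH by (simp add: sum.cl_ivl_Suc)
qed

theorem theorem3p2:
  fixes a :: "nat \<Rightarrow> nat" and k \<alpha> :: nat and \<tau> :: "nat \<Rightarrow> nat"
  assumes "k \<ge> 1"
    and "inj_on a {1..k}"
    and "\<forall>i\<in>{1..k}. a i > 0"
    and "1 \<le> \<alpha>" and "\<alpha> \<le> k"
    and "\<tau> permutes {1..k}"
  shows "(int (f (a ` {1..k})) =
           (\<Sum>j=1..k. \<Sum>d | d dvd a (\<tau> j).
              mobius d * 2 ^ v (a ` \<tau> ` {1..j-1}) d)) \<and>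
         (int (f_alpha \<alpha> (a ` {1..k})) =
           (\<Sum>j=1..k. \<Sum>d | d dvd a (\<tau> j).
              mobius d * int ((v (a ` \<tau> ` {1..j-1}) d) choose (\<alpha> - 1))))"
proof -
  define b where "b = (\<lambda>j. a (\<tau> j))"
  have img: "\<tau> ` {1..k} = {1..k}" using assms(6) by (rule permutes_image)
  have bimg: "b ` {1..k} = a ` {1..k}" unfolding b_def using img by (metis image_image)
  have bimg2: "b ` S = a ` \<tau> ` S" for S unfolding b_def by (simp add: image_image)
  have binj: "inj_on b {1..k}" unfolding b_def
    using comp_inj_on[OF permutes_inj_on[OF assms(6)] , of a] img assms(2) by (simp add: o_def)
  have bpos: "\<forall>i\<in>{1..k}. b i > 0" unfolding b_def using assms(3) img by auto
  have f0: "int (f {}) = 0" by (simp add: f_def)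
  have fa0: "int (f_alpha \<alpha> {}) = 0" using assms(4) by (simp add: f_alpha_def)
  have A: "int (f (b ` {1..k})) = (\<Sum>j=1..k. (\<lambda>B x. \<Sum>d | d dvd x. mobius d * 2 ^ v B d) (b ` {1..j-1}) (b j))"
    by (rule tele[where F="\<lambda>B. int (f B)", OF f0 _ binj bpos]) (subst f_rec, assumption, assumption, subst core_f, assumption, assumption, rule refl)
  have B: "int (f_alpha \<alpha> (b ` {1..k})) = (\<Sum>j=1..k. (\<lambda>B x. \<Sum>d | d dvd x. mobius d * int (v B d choose (\<alpha> - 1))) (b ` {1..j-1}) (b j))"
    by (rule tele[where F="\<lambda>B. int (f_alpha \<alpha> B)", OF fa0 _ binj bpos]) (subst fa_rec[OF _ _ assms(4)], assumption, assumption, subst core_fa, assumption, assumption, rule refl)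
  show ?thesis using A B unfolding bimg by (simp add: b_def image_image)
qed

end
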